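(* Let $\pi_3$ be the five-dimensional complex associative algebra with basis $e_1,\dots,e_5$ and nonzero products $e_1e_1=e_2$, $e_1e_2=e_2e_1=e_3$, $e_1e_4=e_5$, $e_4e_4=e_5$ (all other products of basis elements are zero). A linear operator on $\pi_3$ is a local derivation if and only if its matrix has the form $$\begin{pmatrix} b_{1,1} & 0 & 0 & 0 & 0 \\ b_{2,1} & 2b_{1,1} & 0 & 0 & 0 \\ b_{3,1} & b_{3,2} & 3b_{1,1} & b_{3,4} & 0 \\ 0 & 0 & 0 & b_{1,1} & 0 \\ b_{5,1} & 0 & 0 & b_{5,4} & 2b_{1,1} \end{pmatrix}$$ with $b_{1,1},b_{2,1},b_{3,1},b_{3,2},b_{3,4},b_{5,1},b_{5,4}\in\mathbb{C}$.
   Context: The matrix of a linear operator $T$ is taken with respect to the basis $e_1,\dots,e_5$, with the $j$-th column giving the coordinates of $T(e_j)$. A derivation of an algebra $A$ is a linear map $D$ with $D(xy)=D(x)y+xD(y)$ for all $x,y\in A$. A linear map $\nabla:A\to A$ is a local derivation if for every $x\in A$ there is a derivation $D_x$ of $A$ (depending on $x$) with $\nabla(x)=D_x(x)$. *)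

theory Defs
  imports "HOL-Analysis.Analysis"
begin

text \<open>Index type for the basis e1,...,e5 of pi_3.\<close>
datatype idx = I1 | I2 | I3 | I4 | I5

lemma UNIV_idx: "(UNIV :: idx set) = {I1, I2, I3, I4, I5}"
  by (auto intro: idx.exhaust)

instance idx :: finite
  by standard (simp add: UNIV_idx)

text \<open>The underlying vector space of pi_3: complex^idx, e_j = axis j 1.\<close>
type_synonym pi3 = "complex ^ idx"

text \<open>Multiplication of pi_3, bilinear extension of
  e1e1 = e2, e1e2 = e2e1 = e3, e1e4 = e5, e4e4 = e5, other products zero.\<close>
definition pi3_mult :: "pi3 \<Rightarrow> pi3 \<Rightarrow> pi3" where
  "pi3_mult x y = (\<chi> k. case k of
      I1 \<Rightarrow> 0
    | I2 \<Rightarrow> x$I1 * y$I1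
    | I3 \<Rightarrow> x$I1 * y$I2 + x$I2 * y$I1
    | I4 \<Rightarrow> 0
    | I5 \<Rightarrow> x$I1 * y$I4 + x$I4 * y$I4)"

text \<open>Complex-linear maps of pi_3.\<close>
definition pi3_linear :: "(pi3 \<Rightarrow> pi3) \<Rightarrow> bool" where
  "pi3_linear T \<longleftrightarrow> Vector_Spaces.linear (*s) (*s) T"

definition pi3_derivation :: "(pi3 \<Rightarrow> pi3) \<Rightarrow> bool" where
  "pi3_derivation D \<longleftrightarrow> pi3_linear D \<and>
     (\<forall>x y. D (pi3_mult x y) = pi3_mult (D x) y + pi3_mult x (D y))"

definition pi3_local_derivation :: "(pi3 \<Rightarrow> pi3) \<Rightarrow> bool" where
  "pi3_local_derivation T \<longleftrightarrow> pi3_linear T \<and>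
     (\<forall>x. \<exists>D. pi3_derivation D \<and> T x = D x)"

end

theory Submission
  imports Defs
begin

lemma sum_idx: "(\<Sum>j\<in>UNIV. f j) = f I1 + f I2 + f I3 + f I4 + f I5"
  by (simp add: UNIV_idx add.assoc)
lemma all_idx: "(\<forall>i. P i) \<longleftrightarrow> P I1 \<and> P I2 \<and> P I3 \<and> P I4 \<and> P I5"
  by (metis idx.exhaust)

definition Bm :: "complex \<Rightarrow> complex \<Rightarrow> complex \<Rightarrow> complex \<Rightarrow> complex \<Rightarrow> complex \<Rightarrow> complex \<Rightarrow> complex^idx^idx" where
 "Bm b11 b21 b31 b32 b34 b51 b54 = (\<chi> i j. case (i, j) of
           (I1, I1) \<Rightarrow> b11
         | (I2, I1) \<Rightarrow> b21 | (I2, I2) \<Rightarrow> 2 * b11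
         | (I3, I1) \<Rightarrow> b31 | (I3, I2) \<Rightarrow> b32 | (I3, I3) \<Rightarrow> 3 * b11 | (I3, I4) \<Rightarrow> b34
         | (I4, I4) \<Rightarrow> b11
         | (I5, I1) \<Rightarrow> b51 | (I5, I4) \<Rightarrow> b54 | (I5, I5) \<Rightarrow> 2 * b11
         | _ \<Rightarrow> 0)"

lemma der_mat:
  fixes m :: "complex^idx^idx"
  assumes "\<forall>x y. m *v pi3_mult x y = pi3_mult (m *v x) y + pi3_mult x (m *v y)"
  shows "m = Bm (m$I1$I1) (m$I2$I1) (m$I3$I1) (2*m$I2$I1) (m$I3$I4) (m$I5$I1) (m$I5$I4)"
proof -
  have "\<forall>i j k. (m *v pi3_mult (axis i 1) (axis j 1)) $ k = (pi3_mult (m *v (axis i 1)) (axis j 1) + pi3_mult (axis i 1) (m *v (axis j 1))) $ k"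
    using assms by simp
  then have E: "\<forall>i j k. (\<Sum>l\<in>UNIV. m$k$l * pi3_mult (axis i 1) (axis j 1) $ l) = pi3_mult (m *v (axis i 1)) (axis j 1) $ k + pi3_mult (axis i 1) (m *v (axis j 1)) $ k"
    by (simp add: matrix_vector_mult_def)
  note E2 = E[simplified all_idx sum_idx pi3_mult_def axis_def matrix_vector_mult_def, simplified]
  have eqs: "m$I5$I5 = m$I1$I1 + m$I4$I1 + m$I4$I4" "m$I5$I5 = 2*m$I4$I4 + m$I1$I4" "m$I4$I1 = 0" "m$I1$I4 = 0"
    subgoal using E2 by (elim conjE) assumption
    subgoal using E2 by (elim conjE) assumption
    subgoal using E2 by (elim conjE) assumption
    subgoal using E2 by (elim conjE) assumption
    done
  have k: "m$I4$I4 = m$I1$I1" using eqs by algebra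
  show ?thesis using E2 k
    by (simp add: vec_eq_iff all_idx Bm_def)
qed

lemma lin_mv: "pi3_linear ((*v) A)"
  unfolding pi3_linear_def by (rule matrix_vector_mul_linear_gen)

lemma der_Bm: "pi3_derivation ((*v) (Bm a1 a2 a3 (2*a2) c3 a5 c5))"
  unfolding pi3_derivation_def
proof (intro conjI allI)
  fix x y :: pi3
  show "Bm a1 a2 a3 (2 * a2) c3 a5 c5 *v pi3_mult x y =
       pi3_mult (Bm a1 a2 a3 (2 * a2) c3 a5 c5 *v x) y + pi3_mult x (Bm a1 a2 a3 (2 * a2) c3 a5 c5 *v y)"
    by (simp add: vec_eq_iff all_idx Bm_def matrix_vector_mult_def sum_idx pi3_mult_def algebra_simps)
qed (rule lin_mv)

lemma der_matrix:
  assumes "pi3_derivation D"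
  shows "\<exists>a1 a2 a3 c3 a5 c5. matrix D = Bm a1 a2 a3 (2*a2) c3 a5 c5"
proof -
  have l: "D x = matrix D *v x" for x
    using assms unfolding pi3_derivation_def pi3_linear_def by (simp add: matrix_works)
  have "matrix D = Bm (matrix D$I1$I1) (matrix D$I2$I1) (matrix D$I3$I1) (2*matrix D$I2$I1) (matrix D$I3$I4) (matrix D$I5$I1) (matrix D$I5$I4)"
    apply (rule der_mat)
    using assms unfolding pi3_derivation_def by (simp add: l[symmetric])
  then show ?thesis by blast
qed

theorem theorem5p4:
  fixes T :: "pi3 \<Rightarrow> pi3"
  assumes "pi3_linear T"
  shows "pi3_local_derivation T \<longleftrightarrow>
    (\<exists>b11 b21 b31 b32 b34 b51 b54 :: complex.
       matrix T = (\<chi> i j. case (i, j) of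
           (I1, I1) \<Rightarrow> b11
         | (I2, I1) \<Rightarrow> b21 | (I2, I2) \<Rightarrow> 2 * b11
         | (I3, I1) \<Rightarrow> b31 | (I3, I2) \<Rightarrow> b32 | (I3, I3) \<Rightarrow> 3 * b11 | (I3, I4) \<Rightarrow> b34
         | (I4, I4) \<Rightarrow> b11
         | (I5, I1) \<Rightarrow> b51 | (I5, I4) \<Rightarrow> b54 | (I5, I5) \<Rightarrow> 2 * b11
         | _ \<Rightarrow> 0))"
proof -
  have lT: "T x = matrix T *v x" for x
    using assms unfolding pi3_linear_def by (simp add: matrix_works)
  have "pi3_local_derivation T \<longleftrightarrow> (\<exists>b11 b21 b31 b32 b34 b51 b54. matrix T = Bm b11 b21 b31 b32 b34 b51 b54)"
  proof
    assume "pi3_local_derivation T"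
    then have "\<exists>D. pi3_derivation D \<and> T x = D x" for x
      unfolding pi3_local_derivation_def by blast
    then have "\<exists>a1 a2 a3 c3 a5 c5. matrix T *v x = Bm a1 a2 a3 (2*a2) c3 a5 c5 *v x" for x
      by (metis lT der_matrix pi3_derivation_def pi3_linear_def matrix_works)
    note X = this
    define M where "M = matrix T"
    obtain a1 a2 a3 c3 a5 c5 where h1: "M *v axis I1 1 = Bm a1 a2 a3 (2*a2) c3 a5 c5 *v axis I1 1"
      using X M_def by blast
    obtain a1 a2 a3 c3 a5 c5 where h2: "M *v axis I2 1 = Bm a1 a2 a3 (2*a2) c3 a5 c5 *v axis I2 1"
      using X M_def by blast
    obtain a1 a2 a3 c3 a5 c5 where h3: "M *v axis I3 1 = Bm a1 a2 a3 (2*a2) c3 a5 c5 *v axis I3 1"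
      using X M_def by blast
    obtain a1 a2 a3 c3 a5 c5 where h4: "M *v axis I4 1 = Bm a1 a2 a3 (2*a2) c3 a5 c5 *v axis I4 1"
      using X M_def by blast
    obtain a1 a2 a3 c3 a5 c5 where h5: "M *v axis I5 1 = Bm a1 a2 a3 (2*a2) c3 a5 c5 *v axis I5 1"
      using X M_def by blast
    obtain a1 a2 a3 c3 a5 c5 where h14: "M *v (axis I1 1 + axis I4 1) = Bm a1 a2 a3 (2*a2) c3 a5 c5 *v (axis I1 1 + axis I4 1)"
      using X M_def by blast
    obtain a1 a2 a3 c3 a5 c5 where h24: "M *v (axis I2 1 + axis I4 1) = Bm a1 a2 a3 (2*a2) c3 a5 c5 *v (axis I2 1 + axis I4 1)"
      using X M_def by blast
    obtain a1 a2 a3 c3 a5 c5 where h25: "M *v (axis I2 1 + axis I5 1) = Bm a1 a2 a3 (2*a2) c3 a5 c5 *v (axis I2 1 + axis I5 1)"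
      using X M_def by blast
    obtain a1 a2 a3 c3 a5 c5 where h35: "M *v (axis I3 1 + axis I5 1) = Bm a1 a2 a3 (2*a2) c3 a5 c5 *v (axis I3 1 + axis I5 1)"
      using X M_def by blast
    note H = h1 h2 h3 h4 h5 h14 h24 h25 h35
    note H2 = H[simplified vec_eq_iff all_idx matrix_vector_mult_def sum_idx Bm_def axis_def, simplified]
    have z: "M$I1$I2 = 0" "M$I1$I3 = 0" "M$I1$I4 = 0" "M$I1$I5 = 0"
      "M$I2$I3 = 0" "M$I2$I4 = 0" "M$I2$I5 = 0" "M$I3$I5 = 0" "M$I4$I1 = 0" "M$I4$I2 = 0" "M$I4$I3 = 0"
      "M$I4$I5 = 0" "M$I5$I2 = 0" "M$I5$I3 = 0"
      using H2 by auto
    have d1: "M$I4$I4 = M$I1$I1" using H2(6) z by (elim conjE, algebra)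
    have d2: "M$I2$I2 = 2 * M$I4$I4" using H2(7) z by (elim conjE, algebra)
    have d3: "M$I5$I5 = M$I2$I2" using H2(8) z by (elim conjE, algebra)
    have d4: "2 * M$I3$I3 = 3 * M$I5$I5" using H2(9) z by (elim conjE, algebra)
    have "M = Bm (M$I1$I1) (M$I2$I1) (M$I3$I1) (M$I3$I2) (M$I3$I4) (M$I5$I1) (M$I5$I4)"
      using z d1 d2 d3 d4 by (simp add: vec_eq_iff all_idx Bm_def)
    then show "\<exists>b11 b21 b31 b32 b34 b51 b54. matrix T = Bm b11 b21 b31 b32 b34 b51 b54"
      unfolding M_def by blast
  next
    assume "\<exists>b11 b21 b31 b32 b34 b51 b54. matrix T = Bm b11 b21 b31 b32 b34 b51 b54"
    then obtain b11 b21 b31 b32 b34 b51 b54 where M: "matrix T = Bm b11 b21 b31 b32 b34 b51 b54"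
      by blast
    show "pi3_local_derivation T"
      unfolding pi3_local_derivation_def
    proof (intro conjI allI)
      fix x :: pi3
      show "\<exists>D. pi3_derivation D \<and> T x = D x"
      proof (cases "x$I1 = 0")
        case True
        show ?thesis
          apply (rule exI[of _ "(*v) (Bm b11 (b32/2) 0 (2*(b32/2)) b34 b51 b54)"], rule conjI[OF der_Bm])
          using True by (simp add: lT M vec_eq_iff all_idx Bm_def matrix_vector_mult_def sum_idx)
      next
        case False
        show ?thesis
          apply (rule exI[of _ "(*v) (Bm b11 b21 (b31 + (b32 - 2*b21) * x$I2 / x$I1) (2*b21) b34 b51 b54)"], rule conjI[OF der_Bm])
          using False by (simp add: lT M vec_eq_iff all_idx Bm_def matrix_vector_mult_def sum_idx field_simps)
      qed
    qed (rule assms)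
  qed
  then show ?thesis by (simp only: Bm_def)
qed

end
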